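(* Let $V$ be a vector space of dimension $n$ over a field, and let $g_1,\dots,g_{n+1}\in\mathrm{GL}(V)$ satisfy $\operatorname{rank}(g_i-1)\le 1$ for all $i$ and $g_1\cdots g_{n+1}=\mu\cdot\mathrm{id}_V$ for a scalar $\mu$. If $\mu\ne 1$ and $\mu$ is not an eigenvalue of any $g_i$, then each $g_i$ is a pseudoreflection and the group generated by $g_1,\dots,g_{n+1}$ acts irreducibly on $V$.
   Context: An element $g\in\mathrm{GL}(V)$ is a pseudoreflection if $\operatorname{rank}(g-1)=1$. *)

theory Defs
  imports "Jordan_Normal_Form.DL_Rank" "Jordan_Normal_Form.Char_Poly"
begin

text \<open>V is modelled as K^n (column vectors of dimension n over a field K),
  elements of GL(V) as invertible n x n matrices.\<close>

definition mat_list_prod :: "nat \<Rightarrow> 'a :: semiring_1 mat list \<Rightarrow> 'a mat" where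
  "mat_list_prod n gs = foldr (\<lambda>A B. A * B) gs (1\<^sub>m n)"

definition pseudoreflection :: "nat \<Rightarrow> 'a :: field mat \<Rightarrow> bool" where
  "pseudoreflection n g \<longleftrightarrow> g \<in> carrier_mat n n \<and> invertible_mat g
     \<and> vec_space.rank n (g - 1\<^sub>m n) = 1"

inductive_set gen_mat_group :: "nat \<Rightarrow> 'a :: semiring_1 mat set \<Rightarrow> 'a mat set"
  for n :: nat and S :: "'a mat set" where
  gen_one: "1\<^sub>m n \<in> gen_mat_group n S"
| gen_gen: "g \<in> S \<Longrightarrow> g \<in> gen_mat_group n S"
| gen_inv: "g \<in> S \<Longrightarrow> h \<in> carrier_mat n n \<Longrightarrow> g * h = 1\<^sub>m n \<Longrightarrow> h \<in> gen_mat_group n S"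
| gen_mult: "a \<in> gen_mat_group n S \<Longrightarrow> b \<in> gen_mat_group n S \<Longrightarrow> a * b \<in> gen_mat_group n S"

definition vec_subspace :: "nat \<Rightarrow> 'a :: field vec set \<Rightarrow> bool" where
  "vec_subspace n W \<longleftrightarrow> W \<subseteq> carrier_vec n \<and> 0\<^sub>v n \<in> W
     \<and> (\<forall>v\<in>W. \<forall>w\<in>W. v + w \<in> W) \<and> (\<forall>c. \<forall>v\<in>W. c \<cdot>\<^sub>v v \<in> W)"

definition acts_irreducibly :: "nat \<Rightarrow> 'a :: field mat set \<Rightarrow> bool" where
  "acts_irreducibly n G \<longleftrightarrow> n > 0 \<and>
     (\<forall>W. vec_subspace n W \<and> (\<forall>g\<in>G. \<forall>w\<in>W. g *\<^sub>v w \<in> W)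
        \<longrightarrow> W = {0\<^sub>v n} \<or> W = carrier_vec n)"

end

theory Submission
  imports Defs "Jordan_Normal_Form.DL_Rank_Submatrix"
begin

lemma det2: assumes A: "A \<in> carrier_mat 2 2" shows "det A = A$$(0,0) * A$$(1,1) - A$$(0,1)*A$$(1,0)"
proof -
  have "det A = (\<Sum>i<2. A $$ (i,0) * cofactor A i 0)"
    by (rule laplace_expansion_column[OF A]) auto
  also have "\<dots> = A $$ (0,0) * cofactor A 0 0 + A $$ (1,0) * cofactor A 1 0"
    by (simp add: numeral_2_eq_2)
  also have "cofactor A 0 0 = A $$ (1,1)" unfolding cofactor_def
    using A by (subst det_single, auto simp: mat_delete_def)
  also have "cofactor A 1 0 = - A $$ (0,1)" unfolding cofactor_def
    using A by (subst det_single, auto simp: mat_delete_def)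
  finally show ?thesis by (simp add: algebra_simps)
qed

lemma rank_ge2_minor_ord:
  fixes A :: "'a::field mat"
  assumes A: "A \<in> carrier_mat n n" and lt: "r < r'" "r' < n" "c < c'" "c' < n"
    and ne: "A$$(r,c)*A$$(r',c') \<noteq> A$$(r,c')*A$$(r',c)"
  shows "vec_space.rank n A \<ge> 2"
proof -
  let ?I = "{r,r'}" and ?J = "{c,c'}"
  have cI: "{i. i < dim_row A \<and> i \<in> ?I} = ?I" using A lt by auto
  have cJ: "{i. i < dim_col A \<and> i \<in> ?J} = ?J" using A lt by auto
  let ?S = "submatrix A ?I ?J"
  have S: "?S \<in> carrier_mat 2 2"
    apply (rule carrier_matI) apply (subst dim_submatrix, subst cI) using lt apply simp
    apply (subst dim_submatrix, subst cJ) using lt by simp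
  have k1: "{a\<in>?I. a < r} = {}" "{a\<in>?I. a < r'} = {r}" using lt by auto
  have k2: "{a\<in>?J. a < c} = {}" "{a\<in>?J. a < c'} = {c}" using lt by auto
  have e: "?S $$ (0,0) = A$$(r,c)" "?S $$ (0,1) = A$$(r,c')" "?S $$ (1,0) = A$$(r',c)" "?S $$ (1,1) = A$$(r',c')"
    using submatrix_index_card[of r A c ?I ?J] submatrix_index_card[of r A c' ?I ?J]
      submatrix_index_card[of r' A c ?I ?J] submatrix_index_card[of r' A c' ?I ?J] A lt
    unfolding k1 k2 by auto
  have "det ?S \<noteq> 0" unfolding det2[OF S] e using ne by auto
  from vec_space.rank_gt_minor[OF A this] show ?thesis using cJ A lt by auto
qed

lemma rank_ge2_minor:
  fixes A :: "'a::field mat"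
  assumes A: "A \<in> carrier_mat n n" and lt: "r \<noteq> r'" "r < n" "r' < n" "c \<noteq> c'" "c < n" "c' < n"
    and ne: "A$$(r,c)*A$$(r',c') \<noteq> A$$(r,c')*A$$(r',c)"
  shows "vec_space.rank n A \<ge> 2"
proof (cases "r < r'")
  case True
  show ?thesis proof (cases "c < c'")
    case True
    then show ?thesis using rank_ge2_minor_ord[OF A \<open>r < r'\<close> _ True] lt ne by auto
  next
    case False
    then show ?thesis using rank_ge2_minor_ord[OF A \<open>r < r'\<close>, of c' c] lt ne by (auto simp: mult.commute)
  qed
next
  case False
  hence rr: "r' < r" using lt by auto
  show ?thesis proof (cases "c < c'")
    case True
    then show ?thesis using rank_ge2_minor_ord[OF A rr _ True] lt ne by (auto simp: mult.commute)
  next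
    case False
    then show ?thesis using rank_ge2_minor_ord[OF A rr, of c' c] lt ne by (auto simp: mult.commute)
  qed
qed

lemma rank_ge1_entry:
  fixes A :: "'a::field mat"
  assumes A: "A \<in> carrier_mat n n" and lt: "r < n" "c < n" and ne: "A$$(r,c) \<noteq> 0"
  shows "vec_space.rank n A \<ge> 1"
proof -
  let ?I = "{r}" and ?J = "{c}"
  have cI: "{i. i < dim_row A \<and> i \<in> ?I} = ?I" using A lt by auto
  have cJ: "{i. i < dim_col A \<and> i \<in> ?J} = ?J" using A lt by auto
  let ?S = "submatrix A ?I ?J"
  have S: "?S \<in> carrier_mat 1 1"
    apply (rule carrier_matI) apply (subst dim_submatrix, subst cI) apply simp
    apply (subst dim_submatrix, subst cJ) by simp
  have k1: "{a\<in>?I. a < r} = {}" "{a\<in>?J. a < c} = {}" by auto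
  have e: "?S $$ (0,0) = A$$(r,c)"
    using submatrix_index_card[of r A c ?I ?J] A lt unfolding k1 by auto
  have "det ?S \<noteq> 0" unfolding det_single[OF S] e using ne by auto
  from vec_space.rank_gt_minor[OF A this] show ?thesis using cJ A lt by auto
qed

lemma rank_le1_decomp:
  fixes A :: "'a::field mat"
  assumes A: "A \<in> carrier_mat n n" and rk: "vec_space.rank n A \<le> 1"
  shows "\<exists>u \<psi>. u \<in> carrier_vec n \<and> \<psi> \<in> carrier_vec n \<and> (\<forall>r<n. \<forall>c<n. A$$(r,c) = u$r * \<psi>$c)"
proof (cases "\<forall>r<n. \<forall>c<n. A$$(r,c) = 0")
  case True
  show ?thesis
    by (rule exI[of _ "0\<^sub>v n"], rule exI[of _ "0\<^sub>v n"], insert True, auto)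
next
  case False
  then obtain r0 c0 where rc: "r0 < n" "c0 < n" "A$$(r0,c0) \<noteq> 0" by auto
  define a where "a = A$$(r0,c0)"
  have key: "A$$(r,c) * a = A$$(r,c0) * A$$(r0,c)" if "r < n" "c < n" for r c
  proof (cases "r = r0 \<or> c = c0")
    case True then show ?thesis unfolding a_def by (auto simp: mult.commute)
  next
    case False
    show ?thesis
    proof (rule ccontr)
      assume "\<not> ?thesis"
      hence "vec_space.rank n A \<ge> 2" using rank_ge2_minor[OF A, of r r0 c c0] False that rc unfolding a_def by auto
      thus False using rk by auto
    qed
  qed
  show ?thesis
  proof (intro exI conjI allI impI)
    show "col A c0 \<in> carrier_vec n" using A by auto
    show "vec n (\<lambda>c. A$$(r0,c) / a) \<in> carrier_vec n" by auto
    fix r c assume r: "r < n" and c: "c < n"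
    have "A$$(r,c) * a = A$$(r,c0) * A$$(r0,c)" using key r c by auto
    hence "A$$(r,c) = A$$(r,c0) * (A$$(r0,c)/a)" using rc unfolding a_def
      by (simp add: field_simps)
    thus "A$$(r,c) = col A c0 $ r * vec n (\<lambda>c. A$$(r0,c) / a) $ c" using A r c rc by simp
  qed
qed

lemma rank1_act:
  fixes A :: "'a::field mat"
  assumes A: "A \<in> carrier_mat n n" and uv: "u \<in> carrier_vec n" "\<psi> \<in> carrier_vec n"
    and e: "\<forall>r<n. \<forall>c<n. A$$(r,c) = u$r * \<psi>$c" and x: "x \<in> carrier_vec n"
  shows "A *\<^sub>v x = (\<psi> \<bullet> x) \<cdot>\<^sub>v u"
proof (rule eq_vecI)
  show "dim_vec (A *\<^sub>v x) = dim_vec ((\<psi> \<bullet> x) \<cdot>\<^sub>v u)" using A uv by auto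
  fix r assume "r < dim_vec ((\<psi> \<bullet> x) \<cdot>\<^sub>v u)"
  hence r: "r < n" using uv by auto
  have "(A *\<^sub>v x) $ r = (\<Sum>c = 0..<n. A$$(r,c) * x$c)"
    using A x r by (auto simp: scalar_prod_def row_def)
  also have "\<dots> = (\<Sum>c = 0..<n. u$r * (\<psi>$c * x$c))"
    by (rule sum.cong[OF refl], insert e r, auto)
  also have "\<dots> = (\<psi> \<bullet> x) * u $ r"
    using uv x by (auto simp: scalar_prod_def sum_distrib_left mult.commute)
  finally show "(A *\<^sub>v x) $ r = ((\<psi> \<bullet> x) \<cdot>\<^sub>v u) $ r" using uv r by auto
qed

lemma split_act:
  fixes g :: "'a::field mat"
  assumes g: "g \<in> carrier_mat n n" and x: "x \<in> carrier_vec n"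
  shows "g *\<^sub>v x = x + (g - 1\<^sub>m n) *\<^sub>v x"
proof -
  have "(g - 1\<^sub>m n) *\<^sub>v x = g *\<^sub>v x - x" using minus_mult_distrib_mat_vec[OF g _ x] g x by simp
  thus ?thesis using g x by (auto intro!: eq_vecI)
qed

lemma transpose_minus_one: "(g :: 'a::field mat) \<in> carrier_mat n n \<Longrightarrow>
   transpose_mat g - 1\<^sub>m n = transpose_mat (g - 1\<^sub>m n)"
  by (rule eq_matI) auto

lemma smult_one_vec: "(v :: 'a :: comm_ring_1 vec) \<in> carrier_vec n \<Longrightarrow> (\<mu> \<cdot>\<^sub>m 1\<^sub>m n) *\<^sub>v v = \<mu> \<cdot>\<^sub>v v"
proof (rule eq_vecI)
  fix i assume v: "v \<in> carrier_vec n" and "i < dim_vec (\<mu> \<cdot>\<^sub>v v)"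
  hence i: "i < n" by auto
  have h: "\<And>ia. \<mu> * (if i = ia then 1 else 0) * v $ ia = (if i = ia then \<mu> * v $ ia else 0)" by simp
  have "((\<mu> \<cdot>\<^sub>m 1\<^sub>m n) *\<^sub>v v) $ i = (\<Sum>ia = 0..<n. \<mu> * (if i = ia then 1 else 0) * v $ ia)"
    using v i by (auto simp: scalar_prod_def row_def intro!: sum.cong)
  also have "\<dots> = \<mu> * v $ i" unfolding h using i by simp
  finally show "((\<mu> \<cdot>\<^sub>m 1\<^sub>m n) *\<^sub>v v) $ i = (\<mu> \<cdot>\<^sub>v v) $ i" using i v by simp
qed auto

lemma mlp_carrier: "set hs \<subseteq> carrier_mat n n \<Longrightarrow> mat_list_prod n hs \<in> carrier_mat n n"
  by (induct hs) (auto simp: mat_list_prod_def)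

lemma mlp_Cons: "mat_list_prod n (h # hs) = h * mat_list_prod n hs"
  by (simp add: mat_list_prod_def)

lemma mlp_append: "set xs \<subseteq> carrier_mat n n \<Longrightarrow> set ys \<subseteq> carrier_mat n n \<Longrightarrow>
  mat_list_prod n (xs @ ys) = mat_list_prod n xs * mat_list_prod n ys"
proof (induct xs)
  case Nil
  then show ?case using mlp_carrier[of ys n] by (simp add: mat_list_prod_def)
next
  case (Cons x xs)
  then show ?case using mlp_carrier[of ys n] mlp_carrier[of xs n]
    by (simp add: mlp_Cons assoc_mult_mat[of x n n "mat_list_prod n xs" n "mat_list_prod n ys" n])
qed

lemma mlp_fix: "set hs \<subseteq> carrier_mat n n \<Longrightarrow> v \<in> carrier_vec n \<Longrightarrow> \<forall>h\<in>set hs. h *\<^sub>v v = v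
  \<Longrightarrow> mat_list_prod n hs *\<^sub>v v = v"
proof (induct hs)
  case Nil
  then show ?case by (simp add: mat_list_prod_def)
next
  case (Cons h hs)
  then show ?case using mlp_carrier[of hs n]
    by (simp add: mlp_Cons assoc_mult_mat_vec[of h n n "mat_list_prod n hs" n v])
qed

lemma linv: assumes "(h :: 'a :: semiring_1 mat) \<in> carrier_mat n n" "invertible_mat h"
  shows "\<exists>B\<in>carrier_mat n n. B * h = 1\<^sub>m n \<and> h * B = 1\<^sub>m n"
proof -
  obtain B where B: "h * B = 1\<^sub>m (dim_row h)" "B * h = 1\<^sub>m (dim_row B)"
    using assms unfolding invertible_mat_def inverts_mat_def by blast
  have "dim_col B = n" using arg_cong[OF B(1), of dim_col] assms by auto
  moreover have "dim_row B = n" using arg_cong[OF B(2), of dim_col] assms by auto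
  ultimately show ?thesis using B assms by auto
qed

lemma mlp_linv: "\<forall>h\<in>set hs. h \<in> carrier_mat n n \<and> invertible_mat h \<Longrightarrow>
   \<exists>Q\<in>carrier_mat n n. Q * mat_list_prod n hs = 1\<^sub>m n"
proof (induct hs)
  case Nil
  then show ?case by (auto simp: mat_list_prod_def intro!: bexI[of _ "1\<^sub>m n"])
next
  case (Cons h hs)
  then obtain Q where Q: "Q \<in> carrier_mat n n" "Q * mat_list_prod n hs = 1\<^sub>m n" by auto
  obtain B where B: "B \<in> carrier_mat n n" "B * h = 1\<^sub>m n" using linv Cons by (meson list.set_intros(1))
  have h: "h \<in> carrier_mat n n" using Cons by auto
  have P: "mat_list_prod n hs \<in> carrier_mat n n" using Cons mlp_carrier by auto
  have "(Q * B) * mat_list_prod n (h # hs) = Q * (B * (h * mat_list_prod n hs))"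
    unfolding mlp_Cons using Q B h P by (simp add: assoc_mult_mat[of Q n n B n _ n])
  also have "B * (h * mat_list_prod n hs) = (B * h) * mat_list_prod n hs"
    using assoc_mult_mat[OF B(1) h P] by (rule sym)
  also have "Q * \<dots> = 1\<^sub>m n" using B Q P by simp
  finally show ?case using Q B by (intro bexI[of _ "Q * B"]) auto
qed

lemma fix_all_but_one:
  fixes hs :: "'a :: field mat list"
  assumes hs: "\<forall>g\<in>set hs. g \<in> carrier_mat n n \<and> invertible_mat g"
  and prod: "mat_list_prod n hs = \<mu> \<cdot>\<^sub>m 1\<^sub>m n"
  and ne: "\<forall>g\<in>set hs. \<not> eigenvalue g \<mu>"
  and j: "j < length hs" and v: "v \<in> carrier_vec n" "v \<noteq> 0\<^sub>v n"
  and fx: "\<forall>i<length hs. i \<noteq> j \<longrightarrow> hs!i *\<^sub>v v = v"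
  shows False
proof -
  define xs where "xs = take j hs"
  define ys where "ys = drop (Suc j) hs"
  let ?g = "hs!j"
  have split: "hs = xs @ ?g # ys" unfolding xs_def ys_def using id_take_nth_drop[OF j] .
  have g: "?g \<in> carrier_mat n n" "\<not> eigenvalue ?g \<mu>" using hs ne j nth_mem by blast+
  have xsc: "set xs \<subseteq> carrier_mat n n" using hs unfolding xs_def by (meson in_set_takeD subsetI)
  have ysc: "set ys \<subseteq> carrier_mat n n" using hs unfolding ys_def by (meson in_set_dropD subsetI)
  have fxs: "\<forall>h\<in>set xs. h *\<^sub>v v = v"
  proof
    fix h assume "h \<in> set xs"
    then obtain i where "i < length xs" "h = xs ! i" by (auto simp: in_set_conv_nth)
    thus "h *\<^sub>v v = v" using fx j unfolding xs_def by auto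
  qed
  have fys: "\<forall>h\<in>set ys. h *\<^sub>v v = v"
  proof
    fix h assume "h \<in> set ys"
    then obtain i where "i < length ys" "h = ys ! i" by (auto simp: in_set_conv_nth)
    thus "h *\<^sub>v v = v" using fx j unfolding ys_def by auto
  qed
  define P where "P = mat_list_prod n xs"
  define Q where "Q = mat_list_prod n ys"
  have P: "P \<in> carrier_mat n n" unfolding P_def using mlp_carrier xsc by auto
  have Q: "Q \<in> carrier_mat n n" unfolding Q_def using mlp_carrier ysc by auto
  have "mat_list_prod n hs = P * (?g * Q)"
    unfolding P_def Q_def using split mlp_append[OF xsc, of "?g # ys"] g ysc by (simp add: mlp_Cons)
  hence "\<mu> \<cdot>\<^sub>v v = (P * (?g * Q)) *\<^sub>v v"
    using prod smult_one_vec[OF v(1), of \<mu>] by simp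
  also have "\<dots> = P *\<^sub>v ((?g * Q) *\<^sub>v v)" using P Q g v by (meson assoc_mult_mat_vec mult_carrier_mat)
  also have "(?g * Q) *\<^sub>v v = ?g *\<^sub>v (Q *\<^sub>v v)" using Q g v by (meson assoc_mult_mat_vec)
  also have "Q *\<^sub>v v = v" unfolding Q_def using mlp_fix[OF ysc v(1) fys] .
  finally have e: "P *\<^sub>v (?g *\<^sub>v v) = \<mu> \<cdot>\<^sub>v v" by simp
  have Pv: "P *\<^sub>v v = v" unfolding P_def using mlp_fix[OF xsc v(1) fxs] .
  obtain P' where P': "P' \<in> carrier_mat n n" "P' * P = 1\<^sub>m n"
    using mlp_linv[of xs n] hs unfolding P_def xs_def by (meson in_set_takeD)
  have gv: "?g *\<^sub>v v \<in> carrier_vec n" using g v by auto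
  have "?g *\<^sub>v v = P' *\<^sub>v (P *\<^sub>v (?g *\<^sub>v v))"
    using P' P gv assoc_mult_mat_vec[of P' n n P n "?g *\<^sub>v v"] by simp
  also have "\<dots> = \<mu> \<cdot>\<^sub>v (P' *\<^sub>v (P *\<^sub>v v))" unfolding e Pv using mult_mat_vec[OF P'(1) v(1)] by simp
  also have "P' *\<^sub>v (P *\<^sub>v v) = v" using P' P v assoc_mult_mat_vec[of P' n n P n v] by simp
  finally have "eigenvector ?g v \<mu>" unfolding eigenvector_def using g v by auto
  thus False using g(2) unfolding eigenvalue_def by auto
qed
lemma mlp_transpose: "set (xs :: 'a :: comm_ring_1 mat list) \<subseteq> carrier_mat n n \<Longrightarrow>
  mat_list_prod n (rev (map transpose_mat xs)) = transpose_mat (mat_list_prod n xs)"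
proof (induct xs)
  case Nil
  then show ?case by (simp add: mat_list_prod_def)
next
  case (Cons x xs)
  have x: "x \<in> carrier_mat n n" and xs: "set xs \<subseteq> carrier_mat n n" using Cons by auto
  have c1: "set (rev (map transpose_mat xs)) \<subseteq> carrier_mat n n" using xs by auto
  have "mat_list_prod n (rev (map transpose_mat (x # xs)))
     = mat_list_prod n (rev (map transpose_mat xs)) * mat_list_prod n [transpose_mat x]"
    using mlp_append[OF c1, of "[transpose_mat x]"] x by simp
  also have "\<dots> = transpose_mat (mat_list_prod n xs) * transpose_mat x"
    using Cons x by (simp add: mat_list_prod_def)
  also have "\<dots> = transpose_mat (x * mat_list_prod n xs)"
    using transpose_mult[OF x mlp_carrier[OF xs]] by simp
  finally show ?case by (simp add: mlp_Cons)
qed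

lemma invertible_transpose: assumes "(h :: 'a :: comm_ring_1 mat) \<in> carrier_mat n n" "invertible_mat h"
  shows "invertible_mat (transpose_mat h)"
proof -
  obtain B where B: "B \<in> carrier_mat n n" "B * h = 1\<^sub>m n" "h * B = 1\<^sub>m n" using linv[OF assms] by auto
  have "transpose_mat B * transpose_mat h = 1\<^sub>m n"
    using transpose_mult[OF assms(1) B(1)] B by simp
  moreover have "transpose_mat h * transpose_mat B = 1\<^sub>m n"
    using transpose_mult[OF B(1) assms(1)] B by simp
  ultimately show ?thesis unfolding invertible_mat_def inverts_mat_def using assms B by auto
qed

lemma eigenvalue_transpose: assumes "(h :: 'a :: field mat) \<in> carrier_mat n n"
  shows "eigenvalue (transpose_mat h) \<mu> = eigenvalue h \<mu>"
  using eigenvalue_root_char_poly[OF assms] eigenvalue_root_char_poly[of "transpose_mat h" n] assms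
  by simp

lemma fix_all_but_one_dual:
  fixes hs :: "'a :: field mat list"
  assumes hs: "\<forall>g\<in>set hs. g \<in> carrier_mat n n \<and> invertible_mat g"
  and prod: "mat_list_prod n hs = \<mu> \<cdot>\<^sub>m 1\<^sub>m n"
  and ne: "\<forall>g\<in>set hs. \<not> eigenvalue g \<mu>"
  and j: "j < length hs" and v: "v \<in> carrier_vec n" "v \<noteq> 0\<^sub>v n"
  and fx: "\<forall>i<length hs. i \<noteq> j \<longrightarrow> transpose_mat (hs!i) *\<^sub>v v = v"
  shows False
proof -
  let ?hs = "rev (map transpose_mat hs)"
  have hsc: "set hs \<subseteq> carrier_mat n n" using hs by auto
  show False
  proof (rule fix_all_but_one[of ?hs n \<mu> "length hs - Suc j" v])
    show "\<forall>g\<in>set ?hs. g \<in> carrier_mat n n \<and> invertible_mat g"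
      using hs invertible_transpose by auto
    show "mat_list_prod n ?hs = \<mu> \<cdot>\<^sub>m 1\<^sub>m n"
      unfolding mlp_transpose[OF hsc] prod by (rule eq_matI) auto
    show "\<forall>g\<in>set ?hs. \<not> eigenvalue g \<mu>"
    proof
      fix g assume "g \<in> set ?hs"
      then obtain h where h: "h \<in> set hs" "g = transpose_mat h" by auto
      thus "\<not> eigenvalue g \<mu>" using ne hs eigenvalue_transpose[of h n \<mu>] by auto
    qed
    show "length hs - Suc j < length ?hs" using j by auto
    show "v \<in> carrier_vec n" "v \<noteq> 0\<^sub>v n" using v by auto
    show "\<forall>i<length ?hs. i \<noteq> length hs - Suc j \<longrightarrow> ?hs ! i *\<^sub>v v = v"
    proof (intro allI impI)
      fix i assume i: "i < length ?hs" "i \<noteq> length hs - Suc j"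
      have "?hs ! i = transpose_mat (hs ! (length hs - Suc i))" using i by (simp add: rev_nth)
      moreover have "length hs - Suc i \<noteq> j" using i j by auto
      ultimately show "?hs ! i *\<^sub>v v = v" using fx i by auto
    qed
  qed
qed

lemma kernel_exists:
  fixes f :: "nat \<Rightarrow> 'a :: field vec"
  assumes I: "finite I" "card I < n" and f: "\<forall>i\<in>I. f i \<in> carrier_vec n"
  shows "\<exists>v \<in> carrier_vec n. v \<noteq> 0\<^sub>v n \<and> (\<forall>i\<in>I. f i \<bullet> v = 0)"
proof -
  obtain xs where xs: "set xs = I" "distinct xs" using finite_distinct_list[OF I(1)] by auto
  have lx: "length xs = card I" using xs distinct_card by fastforce
  define rs where "rs = map f xs @ replicate (n - length xs) (0\<^sub>v n)"
  have lrs: "length rs = n" unfolding rs_def using lx I by auto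
  define M where "M = mat_of_rows n rs"
  have M: "M \<in> carrier_mat n n" unfolding M_def using mat_of_rows_carrier(1)[of n rs] lrs by simp
  have rsc: "\<forall>k<n. rs ! k \<in> carrier_vec n"
  proof (intro allI impI)
    fix k assume k: "k < n"
    show "rs ! k \<in> carrier_vec n"
    proof (cases "k < length xs")
      case True then show ?thesis unfolding rs_def using f xs by (auto simp: nth_append)
    next
      case False then show ?thesis unfolding rs_def using k by (auto simp: nth_append)
    qed
  qed
  have n0: "n - 1 < n" "n - 1 \<ge> length xs" using I lx by auto
  have "det M = (\<Sum>j<n. M $$ (n - 1, j) * cofactor M (n - 1) j)"
    by (rule laplace_expansion_row[OF M n0(1)])
  also have "\<dots> = 0"
  proof (rule sum.neutral, intro ballI)
    fix j assume j: "j \<in> {..<n}"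
    have "M $$ (n - 1, j) = rs ! (n - 1) $ j" unfolding M_def mat_of_rows_def using lrs n0 j by auto
    also have "rs ! (n - 1) = 0\<^sub>v n" unfolding rs_def using n0 lrs by (auto simp: nth_append rs_def)
    finally show "M $$ (n - 1, j) * cofactor M (n - 1) j = 0" using j by simp
  qed
  finally obtain v where v: "v \<in> carrier_vec n" "v \<noteq> 0\<^sub>v n" "M *\<^sub>v v = 0\<^sub>v n"
    using det_0_iff_vec_prod_zero_field[OF M] by auto
  show ?thesis
  proof (intro bexI conjI ballI)
    fix i assume "i \<in> I"
    then obtain k where k: "k < length xs" "xs ! k = i" using xs by (auto simp: in_set_conv_nth)
    have kn: "k < n" using k lrs unfolding rs_def by auto
    have "(M *\<^sub>v v) $ k = row M k \<bullet> v" using M kn by auto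
    also have "row M k = rs ! k" unfolding M_def using lrs kn rsc by simp
    also have "rs ! k = f i" unfolding rs_def using k by (auto simp: nth_append)
    finally show "f i \<bullet> v = 0" using v kn by simp
  qed (use v in auto)
qed

lemma subspace_mult_closed:
  fixes U :: "'a :: field mat"
  assumes W: "vec_subspace n W" and U: "U \<in> carrier_mat n n" and c: "c \<in> carrier_vec n"
    and cols: "\<forall>q<n. c $ q \<noteq> 0 \<longrightarrow> col U q \<in> W"
  shows "U *\<^sub>v c \<in> W"
proof -
  define s where "s m = vec n (\<lambda>r. \<Sum>q<m. U $$ (r,q) * c $ q)" for m
  have "m \<le> n \<Longrightarrow> s m \<in> W" for m
  proof (induct m)
    case 0
    have "s 0 = 0\<^sub>v n" unfolding s_def by auto
    then show ?case using W unfolding vec_subspace_def by auto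
  next
    case (Suc m)
    hence sm: "s m \<in> W" and m: "m < n" by auto
    have eq: "s (Suc m) = s m + c $ m \<cdot>\<^sub>v col U m"
      unfolding s_def using U m by (auto intro!: eq_vecI)
    have "c $ m \<cdot>\<^sub>v col U m \<in> W"
    proof (cases "c $ m = 0")
      case True
      have "c $ m \<cdot>\<^sub>v col U m = 0\<^sub>v n" using True U by (auto intro!: eq_vecI)
      then show ?thesis using W unfolding vec_subspace_def by auto
    next
      case False
      then show ?thesis using cols m W unfolding vec_subspace_def by auto
    qed
    then show ?case using sm eq W unfolding vec_subspace_def by auto
  qed
  hence "s n \<in> W" by auto
  moreover have "s n = U *\<^sub>v c" unfolding s_def using U c
    by (auto intro!: eq_vecI simp: scalar_prod_def row_def lessThan_atLeast0)
  ultimately show ?thesis by simp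
qed

lemma det_nz_surj:
  fixes U :: "'a :: field mat"
  assumes U: "U \<in> carrier_mat n n" and d: "det U \<noteq> 0" and x: "x \<in> carrier_vec n"
  shows "\<exists>c\<in>carrier_vec n. U *\<^sub>v c = x"
proof -
  have "U \<in> Units (ring_mat TYPE('a) n n)" by (rule det_non_zero_imp_unit[OF U d])
  then obtain B where B: "B \<in> carrier_mat n n" "U * B = 1\<^sub>m n"
    unfolding Units_def ring_mat_simps by auto
  show ?thesis using B U x by (intro bexI[of _ "B *\<^sub>v x"]) (auto simp: assoc_mult_mat_vec[symmetric])
qed

theorem mainTheorem3:
  fixes n :: nat and gs :: "'a :: field mat list" and \<mu> :: 'a
  assumes "n \<ge> 1"
    and "length gs = n + 1"
    and "\<forall>g\<in>set gs. g \<in> carrier_mat n n \<and> invertible_mat g"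
    and "\<forall>g\<in>set gs. vec_space.rank n (g - 1\<^sub>m n) \<le> 1"
    and "mat_list_prod n gs = \<mu> \<cdot>\<^sub>m 1\<^sub>m n"
    and "\<mu> \<noteq> 1"
    and "\<forall>g\<in>set gs. \<not> eigenvalue g \<mu>"
  shows "(\<forall>g\<in>set gs. pseudoreflection n g) \<and> acts_irreducibly n (gen_mat_group n (set gs))"
proof -
  define N where "N = length gs"
  have N: "N = n + 1" using assms(2) N_def by simp
  have gc: "\<forall>i<N. gs!i \<in> carrier_mat n n \<and> invertible_mat (gs!i)" using assms(3) N_def nth_mem by blast
  have grk: "\<forall>i<N. vec_space.rank n (gs!i - 1\<^sub>m n) \<le> 1" using assms(4) N_def nth_mem by blast
  have "\<forall>i<N. \<exists>u \<psi>. u \<in> carrier_vec n \<and> \<psi> \<in> carrier_vec n \<and> (\<forall>r<n. \<forall>c<n. (gs!i - 1\<^sub>m n)$$(r,c) = u$r * \<psi>$c)"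
    using rank_le1_decomp gc grk by (meson minus_carrier_mat one_carrier_mat)
  then obtain u \<psi> where u\<psi>: "\<forall>i<N. u i \<in> carrier_vec n \<and> \<psi> i \<in> carrier_vec n \<and> (\<forall>r<n. \<forall>c<n. (gs!i - 1\<^sub>m n)$$(r,c) = u i$r * \<psi> i$c)"
    by metis
  have act: "gs!i *\<^sub>v x = x + (\<psi> i \<bullet> x) \<cdot>\<^sub>v u i" if i: "i < N" and x: "x \<in> carrier_vec n" for i x
  proof -
    have "gs!i *\<^sub>v x = x + (gs!i - 1\<^sub>m n) *\<^sub>v x" using split_act gc i x by blast
    also have "(gs!i - 1\<^sub>m n) *\<^sub>v x = (\<psi> i \<bullet> x) \<cdot>\<^sub>v u i"
      by (rule rank1_act, insert gc u\<psi> i x, auto)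
    finally show ?thesis .
  qed
  have actT: "transpose_mat (gs!i) *\<^sub>v y = y + (u i \<bullet> y) \<cdot>\<^sub>v \<psi> i" if i: "i < N" and y: "y \<in> carrier_vec n" for i y
  proof -
    have gi: "gs!i \<in> carrier_mat n n" using gc i by auto
    have "transpose_mat (gs!i) *\<^sub>v y = y + (transpose_mat (gs!i) - 1\<^sub>m n) *\<^sub>v y"
      using split_act[of "transpose_mat (gs!i)" n y] gi y by auto
    also have "transpose_mat (gs!i) - 1\<^sub>m n = transpose_mat (gs!i - 1\<^sub>m n)"
      using transpose_minus_one[OF gi] .
    also have "transpose_mat (gs!i - 1\<^sub>m n) *\<^sub>v y = (u i \<bullet> y) \<cdot>\<^sub>v \<psi> i"
      by (rule rank1_act, insert gi u\<psi> i y, auto simp: mult.commute)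
    finally show ?thesis .
  qed
  have fix\<psi>: "gs!i *\<^sub>v v = v" if "i < N" "v \<in> carrier_vec n" "\<psi> i \<bullet> v = 0" for i v
    using act[OF that(1,2)] that u\<psi> by (auto intro!: eq_vecI)
  have fixu: "transpose_mat (gs!i) *\<^sub>v v = v" if "i < N" "v \<in> carrier_vec n" "u i \<bullet> v = 0" for i v
    using actT[OF that(1,2)] that u\<psi> by (auto intro!: eq_vecI)
  have Lfix: False if "j < N" "v \<in> carrier_vec n" "v \<noteq> 0\<^sub>v n" "\<forall>i<N. i \<noteq> j \<longrightarrow> gs!i *\<^sub>v v = v" for j v
    using fix_all_but_one[OF assms(3) assms(5) assms(7), of j v] that N_def by auto
  have Ldual: False if "j < N" "v \<in> carrier_vec n" "v \<noteq> 0\<^sub>v n"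
      "\<forall>i<N. i \<noteq> j \<longrightarrow> transpose_mat (gs!i) *\<^sub>v v = v" for j v
    using fix_all_but_one_dual[OF assms(3) assms(5) assms(7), of j v] that N_def by auto
  have pr: "vec_space.rank n (gs!i - 1\<^sub>m n) = 1" if i: "i < N" for i
  proof (rule ccontr)
    assume ne: "vec_space.rank n (gs!i - 1\<^sub>m n) \<noteq> 1"
    hence r0: "vec_space.rank n (gs!i - 1\<^sub>m n) = 0" using grk i by fastforce
    have gi: "gs!i \<in> carrier_mat n n" using gc i by auto
    have z: "\<forall>r<n. \<forall>c<n. (gs!i - 1\<^sub>m n)$$(r,c) = 0"
    proof (intro allI impI, rule ccontr)
      fix r c assume "r < n" "c < n" "(gs!i - 1\<^sub>m n)$$(r,c) \<noteq> 0"
      moreover have "gs!i - 1\<^sub>m n \<in> carrier_mat n n" using gi by auto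
      ultimately have "vec_space.rank n (gs!i - 1\<^sub>m n) \<ge> 1" using rank_ge1_entry[of "gs!i - 1\<^sub>m n" n r c] by blast
      thus False using r0 by auto
    qed
    have gfix: "gs!i *\<^sub>v x = x" if x: "x \<in> carrier_vec n" for x
    proof -
      have "gs!i *\<^sub>v x = x + (gs!i - 1\<^sub>m n) *\<^sub>v x" using split_act gi x by blast
      also have "(gs!i - 1\<^sub>m n) *\<^sub>v x = (0\<^sub>v n \<bullet> x) \<cdot>\<^sub>v 0\<^sub>v n"
        by (rule rank1_act, insert gi z x, auto)
      finally show ?thesis using x by (auto intro!: eq_vecI)
    qed
    define j where "j = (if i = 0 then 1 else (0::nat))"
    have j: "j < N" "j \<noteq> i" unfolding j_def using N assms(1) by auto
    let ?I = "{l. l < N \<and> l \<noteq> i \<and> l \<noteq> j}"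
    have Ieq: "?I = {0..<N} - {i,j}" by auto
    have "card ?I = N - 2" unfolding Ieq using i j by (subst card_Diff_subset) auto
    hence cI: "card ?I < n" using N assms(1) by auto
    obtain v where v: "v \<in> carrier_vec n" "v \<noteq> 0\<^sub>v n" "\<forall>l\<in>?I. \<psi> l \<bullet> v = 0"
      using kernel_exists[of ?I n \<psi>] cI u\<psi> by auto
    show False
    proof (rule Lfix[OF j(1) v(1) v(2)], intro allI impI)
      fix l assume l: "l < N" "l \<noteq> j"
      show "gs!l *\<^sub>v v = v"
      proof (cases "l = i")
        case True then show ?thesis using gfix v by auto
      next
        case False then show ?thesis using fix\<psi>[OF l(1) v(1)] v l by auto
      qed
    qed
  qed
  have part1: "\<forall>g\<in>set gs. pseudoreflection n g"
  proof
    fix g assume "g \<in> set gs"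
    then obtain i where i: "i < N" "g = gs!i" unfolding N_def by (auto simp: in_set_conv_nth)
    show "pseudoreflection n g" unfolding pseudoreflection_def using i gc pr by auto
  qed
  define idx where "idx j q = (if q < j then q else Suc q)" for j q :: nat
  define UU where "UU j = mat n n (\<lambda>(p,q). u (idx j q) $ p)" for j
  have UU: "UU j \<in> carrier_mat n n" for j unfolding UU_def by auto
  have colU: "col (UU j) q = u (idx j q)" if "q < n" "j < N" for j q
  proof -
    have "idx j q < N" unfolding idx_def using that N by auto
    thus ?thesis unfolding UU_def using that u\<psi> by (auto intro!: eq_vecI)
  qed
  have detU: "det (UU j) \<noteq> 0" if j: "j < N" for j
  proof
    assume "det (UU j) = 0"
    hence "det (transpose_mat (UU j)) = 0" using det_transpose[OF UU] by simp
    then obtain \<phi> where \<phi>: "\<phi> \<in> carrier_vec n" "\<phi> \<noteq> 0\<^sub>v n" "transpose_mat (UU j) *\<^sub>v \<phi> = 0\<^sub>v n"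
      using det_0_iff_vec_prod_zero_field[of "transpose_mat (UU j)" n] UU[of j] by auto
    have uz: "u (idx j q) \<bullet> \<phi> = 0" if q: "q < n" for q
    proof -
      have "(transpose_mat (UU j) *\<^sub>v \<phi>) $ q = row (transpose_mat (UU j)) q \<bullet> \<phi>" using UU[of j] q by auto
      also have "row (transpose_mat (UU j)) q = col (UU j) q" using UU[of j] q by auto
      also have "\<dots> = u (idx j q)" using colU q j by auto
      finally show ?thesis using \<phi> q by auto
    qed
    show False
    proof (rule Ldual[OF j \<phi>(1) \<phi>(2)], intro allI impI)
      fix i assume i: "i < N" "i \<noteq> j"
      define q where "q = (if i < j then i else i - 1)"
      have q: "q < n" "idx j q = i" unfolding q_def idx_def using i j N by auto
      show "transpose_mat (gs!i) *\<^sub>v \<phi> = \<phi>" using fixu[OF i(1) \<phi>(1)] uz[OF q(1)] q by auto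
    qed
  qed
  have part2: "acts_irreducibly n (gen_mat_group n (set gs))"
    unfolding acts_irreducibly_def
  proof (intro conjI allI impI)
    show "n > 0" using assms(1) by auto
    fix W assume WA: "vec_subspace n W \<and> (\<forall>g\<in>gen_mat_group n (set gs). \<forall>w\<in>W. g *\<^sub>v w \<in> W)"
    hence W: "vec_subspace n W" by auto
    have Wc: "W \<subseteq> carrier_vec n" and W0: "0\<^sub>v n \<in> W" and Wadd: "\<forall>v\<in>W. \<forall>w\<in>W. v + w \<in> W"
      and Wsm: "\<forall>c. \<forall>v\<in>W. c \<cdot>\<^sub>v v \<in> W" using W unfolding vec_subspace_def by auto
    have inv: "gs!i *\<^sub>v w \<in> W" if "i < N" "w \<in> W" for i w
      using WA that gen_gen[of "gs!i" "set gs" n] N_def nth_mem by blast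
    show "W = {0\<^sub>v n} \<or> W = carrier_vec n"
    proof (rule ccontr)
      assume nt: "\<not> (W = {0\<^sub>v n} \<or> W = carrier_vec n)"
      then obtain w0 where w0: "w0 \<in> W" "w0 \<noteq> 0\<^sub>v n" using W0 by blast
      have cover: "u i \<in> W" if i: "i < N" and ex: "\<not> (\<forall>w\<in>W. \<psi> i \<bullet> w = 0)" for i
      proof -
        obtain w where w: "w \<in> W" "\<psi> i \<bullet> w \<noteq> 0" using ex by auto
        define a where "a = \<psi> i \<bullet> w"
        have wc: "w \<in> carrier_vec n" using w Wc by auto
        have "(1/a) \<cdot>\<^sub>v (gs!i *\<^sub>v w + (-1) \<cdot>\<^sub>v w) \<in> W" using inv[OF i w(1)] w Wadd Wsm by auto
        moreover have "(1/a) \<cdot>\<^sub>v (gs!i *\<^sub>v w + (-1) \<cdot>\<^sub>v w) = u i"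
          unfolding act[OF i wc] a_def[symmetric] using wc u\<psi> i w(2) unfolding a_def[symmetric]
          by (auto intro!: eq_vecI simp: field_simps)
        ultimately show ?thesis by simp
      qed
      show False
      proof (cases "\<forall>i<N. \<forall>w\<in>W. \<psi> i \<bullet> w = 0")
        case True
        show False
          by (rule Lfix[of 0 w0], insert w0 Wc True fix\<psi> N, auto)
      next
        case False
        then obtain r where r: "r < N" "\<not> (\<forall>w\<in>W. \<psi> r \<bullet> w = 0)" by auto
        have urW: "u r \<in> W" using cover[OF r] .
        show False
        proof (cases "\<forall>i<N. u i \<in> W")
          case True
          have "carrier_vec n \<subseteq> W"
          proof
            fix x :: "'a vec" assume x: "x \<in> carrier_vec n"
            have j0: "0 < N" using N by auto
            obtain c where c: "c \<in> carrier_vec n" "UU 0 *\<^sub>v c = x"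
              using det_nz_surj[OF UU detU[OF j0] x] by auto
            have "UU 0 *\<^sub>v c \<in> W"
            proof (rule subspace_mult_closed[OF W UU c(1)], intro allI impI)
              fix q assume q: "q < n"
              have "idx 0 q < N" unfolding idx_def using q N by auto
              thus "col (UU 0) q \<in> W" using colU[OF q j0] True by auto
            qed
            thus "x \<in> W" using c by simp
          qed
          thus False using nt Wc by auto
        next
          case False
          then obtain j where j: "j < N" "u j \<notin> W" by auto
          have jT: "\<forall>w\<in>W. \<psi> j \<bullet> w = 0" using cover[OF j(1)] j(2) by auto
          have rj: "r \<noteq> j" using urW j by auto
          define pos where "pos i = (if i < j then i else i - 1)" for i :: nat
          define I where "I = {i. i < N \<and> i \<noteq> j \<and> i \<noteq> r \<and> (u i \<notin> W \<or> \<not> (\<forall>w\<in>W. \<psi> i \<bullet> w = 0))}"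
          define f where "f i = (if u i \<notin> W then unit_vec n (pos i) else transpose_mat (UU j) *\<^sub>v \<psi> i)" for i
          have "I \<subseteq> {0..<N} - {j,r}" unfolding I_def by auto
          hence "card I \<le> card ({0..<N} - {j,r})" by (intro card_mono) auto
          also have "card ({0..<N} - {j,r}) = N - 2" using j r rj by (subst card_Diff_subset) auto
          finally have cI: "card I < n" using N assms(1) by auto
          have UTc: "transpose_mat (UU j) \<in> carrier_mat n n" using UU[of j] by simp
          have fI: "\<forall>i\<in>I. f i \<in> carrier_vec n" unfolding f_def I_def
            using UTc u\<psi> mult_mat_vec_carrier[OF UTc] by auto
          have finI: "finite I" unfolding I_def by auto
          obtain c where c: "c \<in> carrier_vec n" "c \<noteq> 0\<^sub>v n" "\<forall>i\<in>I. f i \<bullet> c = 0"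
            using kernel_exists[OF finI cI fI] by auto
          define w where "w = UU j *\<^sub>v c"
          have wW: "w \<in> W" unfolding w_def
          proof (rule subspace_mult_closed[OF W UU[of j] c(1)], intro allI impI)
            fix q assume q: "q < n" and cq: "c $ q \<noteq> 0"
            show "col (UU j) q \<in> W"
            proof (rule ccontr)
              assume nW: "col (UU j) q \<notin> W"
              let ?i = "idx j q"
              have iN: "?i < N" "?i \<noteq> j" "pos ?i = q" unfolding idx_def pos_def using q N by auto
              have uiW: "u ?i \<notin> W" using nW colU[OF q j(1)] by auto
              hence "?i \<noteq> r" using urW by auto
              hence "?i \<in> I" unfolding I_def using iN uiW by auto
              hence "f ?i \<bullet> c = 0" using c by auto
              moreover have "f ?i = unit_vec n q" unfolding f_def using uiW iN by auto
              ultimately have "c $ q = 0" using c q by auto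
              thus False using cq by auto
            qed
          qed
          have wc: "w \<in> carrier_vec n" unfolding w_def using UU[of j] c by auto
          have wnz: "w \<noteq> 0\<^sub>v n"
          proof
            assume "w = 0\<^sub>v n"
            hence "det (UU j) = 0" using det_0_iff_vec_prod_zero_field[OF UU[of j]] c unfolding w_def by auto
            thus False using detU[OF j(1)] by auto
          qed
          show False
          proof (rule Lfix[OF r(1) wc wnz], intro allI impI)
            fix i assume i: "i < N" "i \<noteq> r"
            show "gs!i *\<^sub>v w = w"
            proof (cases "\<forall>w\<in>W. \<psi> i \<bullet> w = 0")
              case True
              then show ?thesis using fix\<psi>[OF i(1) wc] wW by auto
            next
              case False
              have uiW: "u i \<in> W" using cover[OF i(1) False] .
              have "i \<noteq> j" using False jT by auto
              hence "i \<in> I" unfolding I_def using i False by auto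
              hence "f i \<bullet> c = 0" using c by auto
              moreover have "f i = transpose_mat (UU j) *\<^sub>v \<psi> i" unfolding f_def using uiW by auto
              ultimately have "\<psi> i \<bullet> w = 0" unfolding w_def
                using transpose_vec_mult_scalar[OF UU[of j] c(1), of "\<psi> i"] u\<psi> i by auto
              then show ?thesis using fix\<psi>[OF i(1) wc] by auto
            qed
          qed
        qed
      qed
    qed
  qed
  show ?thesis using part1 part2 by auto
qed

end
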